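(* Let $d\ge2$ and for real $\eta,\beta$ let $\rho(\eta,\beta)=(1-\eta-\beta)\frac{\mathbb{I}}{d^2}+\eta\frac{V}{d}+\beta\frac{V^{T_A}}{d}$ on $\mathbb{C}^d\otimes\mathbb{C}^d$. Then $\rho(\eta,\beta)$ is local-positive if and only if $$-\frac{1}{d-1}\le\eta+\beta\le1,\qquad -(d-1)\eta+\beta\le1,\qquad \eta-(d-1)\beta\le1.$$
   Context: $V=\sum_{i,j}|ij\rangle\langle ji|$ is the swap operator and $V^{T_A}=\sum_{i,j}|ii\rangle\langle jj|$ its partial transpose on the first factor in a fixed orthonormal basis. An operator $M$ on $\mathcal{H}_A\otimes\mathcal{H}_B$ is local-positive if $\operatorname{Tr}(M\,P_A\otimes P_B)\ge0$ for all rank-one projectors $P_A$ on $\mathcal{H}_A$ and $P_B$ on $\mathcal{H}_B$. *)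

theory Defs
  imports Complex_Main "HOL-Library.Complex_Order"
begin

text \<open>Operators on C^d (x) C^d are represented by their matrix entries in the
  product basis |i j>, indices i, j < d:  M (i,j) (k,l) = <i j| M |k l>.
  Operators on C^d are matrices nat => nat => complex with indices < d.\<close>

type_synonym op2 = "nat \<times> nat \<Rightarrow> nat \<times> nat \<Rightarrow> complex"

definition ident2 :: op2 where
  "ident2 r s = (if r = s then 1 else 0)"

definition swap_op :: op2 where
  "swap_op = (\<lambda>(a,b) (c,e). if a = e \<and> b = c then 1 else 0)"

definition ptA :: "op2 \<Rightarrow> op2" where
  "ptA M = (\<lambda>(a,b) (c,e). M (c,b) (a,e))"

definition tensor :: "(nat \<Rightarrow> nat \<Rightarrow> complex) \<Rightarrow> (nat \<Rightarrow> nat \<Rightarrow> complex) \<Rightarrow> op2" where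
  "tensor P Q = (\<lambda>(a,b) (c,e). P a c * Q b e)"

definition tr_prod :: "nat \<Rightarrow> op2 \<Rightarrow> op2 \<Rightarrow> complex" where
  "tr_prod d M N = (\<Sum>r\<in>{..<d}\<times>{..<d}. \<Sum>s\<in>{..<d}\<times>{..<d}. M r s * N s r)"

definition rank_one_proj :: "nat \<Rightarrow> (nat \<Rightarrow> nat \<Rightarrow> complex) \<Rightarrow> bool" where
  "rank_one_proj d P \<longleftrightarrow> (\<exists>\<psi> :: nat \<Rightarrow> complex.
      (\<Sum>i<d. (cmod (\<psi> i))\<^sup>2) = 1 \<and>
      (\<forall>i<d. \<forall>j<d. P i j = \<psi> i * cnj (\<psi> j)))"

definition local_positive :: "nat \<Rightarrow> op2 \<Rightarrow> bool" where
  "local_positive d M \<longleftrightarrow> (\<forall>PA PB. rank_one_proj d PA \<longrightarrow> rank_one_proj d PB \<longrightarrow>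
      0 \<le> tr_prod d M (tensor PA PB))"

definition rho :: "nat \<Rightarrow> real \<Rightarrow> real \<Rightarrow> op2" where
  "rho d \<eta> \<beta> = (\<lambda>r s.
      complex_of_real ((1 - \<eta> - \<beta>) / (real d)\<^sup>2) * ident2 r s
    + complex_of_real (\<eta> / real d) * swap_op r s
    + complex_of_real (\<beta> / real d) * ptA swap_op r s)"

end

theory Submission
  imports Defs
begin

lemma sum_pair: "(\<Sum>r\<in>A\<times>B. h r) = (\<Sum>a\<in>A. \<Sum>b\<in>B. h (a,b))"
  by (simp add: sum.cartesian_product)

lemma tr4: "tr_prod d M N = (\<Sum>a<d. \<Sum>b<d. \<Sum>c<d. \<Sum>e<d. M (a,b) (c,e) * N (c,e) (a,b))"
  unfolding tr_prod_def sum_pair by simp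

lemma ifm: "(if A \<and> B then 1 else 0) * (X::complex) = (if A then if B then X else 0 else 0)"
  by simp

lemma ifm2: "(if A \<and> B then 1 else 0) * (X::complex) = (if B then if A then X else 0 else 0)"
  by simp

lemma tr_lin: "tr_prod d (\<lambda>r s. x * A r s + y * B r s + z * C r s) N
   = x * tr_prod d A N + y * tr_prod d B N + z * tr_prod d C N"
  unfolding tr_prod_def by (simp add: algebra_simps sum.distrib sum_distrib_left)

lemma tr_id: "tr_prod d ident2 (tensor P Q) = (\<Sum>a<d. P a a) * (\<Sum>b<d. Q b b)"
  unfolding tr4 ident2_def tensor_def by (simp add: sum_product ifm2)

lemma tr_swap: "tr_prod d swap_op (tensor P Q) = (\<Sum>a<d. \<Sum>b<d. P b a * Q a b)"
  unfolding tr4 swap_op_def tensor_def by (simp add: ifm)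

lemma tr_pswap: "tr_prod d (ptA swap_op) (tensor P Q) = (\<Sum>a<d. \<Sum>c<d. P c a * Q c a)"
  unfolding tr4 swap_op_def ptA_def tensor_def 
  apply (simp add: ifm)
  apply (subst sum.swap) apply simp
  done

definition Fv :: "nat \<Rightarrow> real \<Rightarrow> real \<Rightarrow> real \<Rightarrow> real \<Rightarrow> real" where
  "Fv d \<eta> \<beta> x y = (1 - \<eta> - \<beta>) / (real d)\<^sup>2 + \<eta> / real d * x + \<beta> / real d * y"

lemma sq_norm_c: "z * cnj z = complex_of_real ((cmod z)\<^sup>2)"
  by (metis complex_norm_square)

lemma val:
  assumes P: "\<forall>i<d. \<forall>j<d. P i j = \<psi> i * cnj (\<psi> j)"
    and Q: "\<forall>i<d. \<forall>j<d. Q i j = \<phi> i * cnj (\<phi> j)"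
    and n1: "(\<Sum>i<d. (cmod (\<psi> i))\<^sup>2) = 1" and n2: "(\<Sum>i<d. (cmod (\<phi> i))\<^sup>2) = 1"
  shows "tr_prod d (rho d \<eta> \<beta>) (tensor P Q) = complex_of_real (Fv d \<eta> \<beta>
      ((cmod (\<Sum>a<d. cnj (\<psi> a) * \<phi> a))\<^sup>2) ((cmod (\<Sum>a<d. \<psi> a * \<phi> a))\<^sup>2))"
proof -
  have i: "tr_prod d ident2 (tensor P Q) = 1"
  proof -
    have "(\<Sum>a<d. P a a) = (\<Sum>a<d. complex_of_real ((cmod (\<psi> a))\<^sup>2))"
      using P by (intro sum.cong) (auto simp: sq_norm_c)
    also have "\<dots> = 1" using n1 by (metis of_real_sum of_real_1)
    finally have 1: "(\<Sum>a<d. P a a) = 1" .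
    have "(\<Sum>a<d. Q a a) = (\<Sum>a<d. complex_of_real ((cmod (\<phi> a))\<^sup>2))"
      using Q by (intro sum.cong) (auto simp: sq_norm_c)
    also have "\<dots> = 1" using n2 by (metis of_real_sum of_real_1)
    finally have 2: "(\<Sum>a<d. Q a a) = 1" .
    show ?thesis by (simp add: tr_id 1 2)
  qed
  have s: "tr_prod d swap_op (tensor P Q) = complex_of_real ((cmod (\<Sum>a<d. cnj (\<psi> a) * \<phi> a))\<^sup>2)"
  proof -
    have "tr_prod d swap_op (tensor P Q) = (\<Sum>a<d. \<Sum>b<d. (cnj (\<psi> a) * \<phi> a) * cnj (cnj (\<psi> b) * \<phi> b))"
      unfolding tr_swap using P Q by (intro sum.cong) (auto simp: algebra_simps)
    also have "\<dots> = (\<Sum>a<d. cnj (\<psi> a) * \<phi> a) * cnj (\<Sum>a<d. cnj (\<psi> a) * \<phi> a)"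
      by (simp add: sum_product)
    also note sq_norm_c
    finally show ?thesis .
  qed
  have p: "tr_prod d (ptA swap_op) (tensor P Q) = complex_of_real ((cmod (\<Sum>a<d. \<psi> a * \<phi> a))\<^sup>2)"
  proof -
    have "tr_prod d (ptA swap_op) (tensor P Q) = (\<Sum>a<d. \<Sum>b<d. (\<psi> b * \<phi> b) * cnj (\<psi> a * \<phi> a))"
      unfolding tr_pswap using P Q by (intro sum.cong) (auto simp: algebra_simps)
    also have "\<dots> = (\<Sum>a<d. \<psi> a * \<phi> a) * cnj (\<Sum>a<d. \<psi> a * \<phi> a)"
      by (simp add: sum_product) (subst sum.swap, simp)
    also note sq_norm_c
    finally show ?thesis .
  qed
  show ?thesis
    unfolding rho_def tr_lin i s p Fv_def by simp
qed

lemma cs: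
  assumes n1: "(\<Sum>i<d. (cmod (\<psi> i))\<^sup>2) = 1" and n2: "(\<Sum>i<d. (cmod (\<phi> i))\<^sup>2) = 1"
    and that: "\<And>z. cmod (f z) = cmod z"
  shows "cmod (\<Sum>a<d. f (\<psi> a) * \<phi> a) \<le> 1"
proof -
  have "cmod (\<Sum>a<d. f (\<psi> a) * \<phi> a) \<le> (\<Sum>a<d. cmod (f (\<psi> a) * \<phi> a))"
    by (rule norm_sum)
  also have "\<dots> \<le> (\<Sum>a<d. ((cmod (\<psi> a))\<^sup>2 + (cmod (\<phi> a))\<^sup>2) / 2)"
  proof (rule sum_mono)
    fix a
    have "0 \<le> (cmod (\<psi> a) - cmod (\<phi> a))\<^sup>2" by simp
    then show "cmod (f (\<psi> a) * \<phi> a) \<le> ((cmod (\<psi> a))\<^sup>2 + (cmod (\<phi> a))\<^sup>2) / 2"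
      by (simp add: norm_mult that power2_eq_square algebra_simps)
  qed
  also have "\<dots> = 1" using n1 n2 by (simp add: sum_divide_distrib[symmetric] sum.distrib)
  finally show ?thesis .
qed


definition unitv :: "nat \<Rightarrow> (nat \<Rightarrow> complex) \<Rightarrow> bool" where
  "unitv d \<psi> \<longleftrightarrow> (\<Sum>i<d. (cmod (\<psi> i))\<^sup>2) = 1"

lemma lp_iff: "local_positive d (rho d \<eta> \<beta>) \<longleftrightarrow>
  (\<forall>\<psi> \<phi>. unitv d \<psi> \<longrightarrow> unitv d \<phi> \<longrightarrow> 0 \<le> Fv d \<eta> \<beta>
      ((cmod (\<Sum>a<d. cnj (\<psi> a) * \<phi> a))\<^sup>2) ((cmod (\<Sum>a<d. \<psi> a * \<phi> a))\<^sup>2))"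
proof
  assume L: "local_positive d (rho d \<eta> \<beta>)"
  show "\<forall>\<psi> \<phi>. unitv d \<psi> \<longrightarrow> unitv d \<phi> \<longrightarrow> 0 \<le> Fv d \<eta> \<beta>
      ((cmod (\<Sum>a<d. cnj (\<psi> a) * \<phi> a))\<^sup>2) ((cmod (\<Sum>a<d. \<psi> a * \<phi> a))\<^sup>2)"
  proof (intro allI impI)
    fix \<psi> \<phi> :: "nat \<Rightarrow> complex" assume u1: "unitv d \<psi>" and u2: "unitv d \<phi>"
    let ?P = "\<lambda>i j. \<psi> i * cnj (\<psi> j)" and ?Q = "\<lambda>i j. \<phi> i * cnj (\<phi> j)"
    have "rank_one_proj d ?P" "rank_one_proj d ?Q"
      using u1 u2 unfolding rank_one_proj_def unitv_def by blast+
    then have "0 \<le> tr_prod d (rho d \<eta> \<beta>) (tensor ?P ?Q)" using L unfolding local_positive_def by blast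
    also have "tr_prod d (rho d \<eta> \<beta>) (tensor ?P ?Q) = complex_of_real (Fv d \<eta> \<beta>
      ((cmod (\<Sum>a<d. cnj (\<psi> a) * \<phi> a))\<^sup>2) ((cmod (\<Sum>a<d. \<psi> a * \<phi> a))\<^sup>2))"
      using u1 u2 unfolding unitv_def by (intro val) auto
    finally show "0 \<le> Fv d \<eta> \<beta>
      ((cmod (\<Sum>a<d. cnj (\<psi> a) * \<phi> a))\<^sup>2) ((cmod (\<Sum>a<d. \<psi> a * \<phi> a))\<^sup>2)"
      by (simp add: less_eq_complex_def)
  qed
next
  assume R: "\<forall>\<psi> \<phi>. unitv d \<psi> \<longrightarrow> unitv d \<phi> \<longrightarrow> 0 \<le> Fv d \<eta> \<beta>
      ((cmod (\<Sum>a<d. cnj (\<psi> a) * \<phi> a))\<^sup>2) ((cmod (\<Sum>a<d. \<psi> a * \<phi> a))\<^sup>2)"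
  show "local_positive d (rho d \<eta> \<beta>)"
    unfolding local_positive_def
  proof (intro allI impI)
    fix PA PB assume "rank_one_proj d PA" "rank_one_proj d PB"
    then obtain \<psi> \<phi> where u1: "unitv d \<psi>" and u2: "unitv d \<phi>"
      and P: "\<forall>i<d. \<forall>j<d. PA i j = \<psi> i * cnj (\<psi> j)"
      and Q: "\<forall>i<d. \<forall>j<d. PB i j = \<phi> i * cnj (\<phi> j)"
      unfolding rank_one_proj_def unitv_def by blast
    have "tr_prod d (rho d \<eta> \<beta>) (tensor PA PB) = complex_of_real (Fv d \<eta> \<beta>
      ((cmod (\<Sum>a<d. cnj (\<psi> a) * \<phi> a))\<^sup>2) ((cmod (\<Sum>a<d. \<psi> a * \<phi> a))\<^sup>2))"
      using u1 u2 P Q unfolding unitv_def by (intro val) auto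
    moreover have "0 \<le> Fv d \<eta> \<beta>
      ((cmod (\<Sum>a<d. cnj (\<psi> a) * \<phi> a))\<^sup>2) ((cmod (\<Sum>a<d. \<psi> a * \<phi> a))\<^sup>2)"
      using R u1 u2 by blast
    ultimately show "0 \<le> tr_prod d (rho d \<eta> \<beta>) (tensor PA PB)"
      by (simp add: less_eq_complex_def)
  qed
qed

lemma sum01:
  fixes d :: nat
  assumes "d \<ge> 2" and "\<And>i. i \<noteq> 0 \<Longrightarrow> i \<noteq> 1 \<Longrightarrow> g i = (0::'a::comm_monoid_add)"
  shows "(\<Sum>i<d. g i) = g 0 + g 1"
proof -
  have "(\<Sum>i<d. g i) = (\<Sum>i\<in>{0,1}. g i)"
    using assms by (intro sum.mono_neutral_right) auto
  then show ?thesis by simp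
qed

definition e0 :: "nat \<Rightarrow> complex" where "e0 i = (if i = 0 then 1 else 0)"
definition e1 :: "nat \<Rightarrow> complex" where "e1 i = (if i = 1 then 1 else 0)"
definition cc :: complex where "cc = complex_of_real (sqrt (1/2))"
definition uu :: "nat \<Rightarrow> complex" where "uu i = (if i = 0 then cc else if i = 1 then \<i> * cc else 0)"
definition vv :: "nat \<Rightarrow> complex" where "vv i = cnj (uu i)"

lemma cc2: "cc * cc = 1/2" "cmod cc ^ 2 = 1/2" "cnj cc = cc"
  unfolding cc_def by (simp_all flip: of_real_mult add: power2_eq_square)

lemma units: assumes "d \<ge> 2" shows "unitv d e0" "unitv d e1" "unitv d uu" "unitv d vv"
  unfolding unitv_def using assms
  by (subst sum01; auto simp: e0_def e1_def uu_def vv_def norm_mult cc2)+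

lemma vals: assumes "d \<ge> 2"
  shows "(\<Sum>a<d. cnj (e0 a) * e1 a) = 0" "(\<Sum>a<d. e0 a * e1 a) = 0"
   "(\<Sum>a<d. cnj (e0 a) * e0 a) = 1" "(\<Sum>a<d. e0 a * e0 a) = 1"
   "(\<Sum>a<d. cnj (uu a) * uu a) = 1" "(\<Sum>a<d. uu a * uu a) = 0"
   "(\<Sum>a<d. cnj (uu a) * vv a) = 0" "(\<Sum>a<d. uu a * vv a) = 1"
  using assms
  by (subst sum01; auto simp: e0_def e1_def uu_def vv_def cc2 algebra_simps)+


lemma Fv_iff: assumes "d \<ge> 2"
  shows "0 \<le> Fv d \<eta> \<beta> x y \<longleftrightarrow> 0 \<le> 1 - \<eta> - \<beta> + real d * \<eta> * x + real d * \<beta> * y"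
proof -
  have dp: "real d > 0" using assms by simp
  have "Fv d \<eta> \<beta> x y = (1 - \<eta> - \<beta> + real d * \<eta> * x + real d * \<beta> * y) / (real d)\<^sup>2"
    unfolding Fv_def using dp by (simp add: field_simps power2_eq_square)
  then show ?thesis using dp by (simp add: zero_le_divide_iff)
qed

lemma bil: fixes a b c e x y :: real
  shows "0\<le>a \<Longrightarrow> 0\<le>b \<Longrightarrow> 0\<le>c \<Longrightarrow> 0\<le>e \<Longrightarrow> 0\<le>x \<Longrightarrow> x\<le>1 \<Longrightarrow> 0\<le>y \<Longrightarrow> y\<le>1
   \<Longrightarrow> 0 \<le> (1-x)*(1-y)*a + x*(1-y)*b + (1-x)*y*c + x*y*e"
  by (intro add_nonneg_nonneg mult_nonneg_nonneg) auto

theorem mainTheorem8: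
  fixes d :: nat and \<eta> \<beta> :: real
  assumes "d \<ge> 2"
  shows "local_positive d (rho d \<eta> \<beta>) \<longleftrightarrow>
    (- 1 / (real d - 1) \<le> \<eta> + \<beta> \<and> \<eta> + \<beta> \<le> 1 \<and>
     - (real d - 1) * \<eta> + \<beta> \<le> 1 \<and>
     \<eta> - (real d - 1) * \<beta> \<le> 1)"
proof -
  define D where "D = real d"
  have D2: "D \<ge> 2" using assms unfolding D_def by simp
  have e1: "- 1 / (real d - 1) \<le> \<eta> + \<beta> \<longleftrightarrow> 0 \<le> 1 - \<eta> - \<beta> + D * \<eta> * 1 + D * \<beta> * 1"
  proof -
    have "- 1 / (real d - 1) \<le> \<eta> + \<beta> \<longleftrightarrow> - 1 \<le> (\<eta> + \<beta>) * (D - 1)"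
    proof -
      have pos: "real d - 1 > 0" using D2 unfolding D_def by simp
      have "(- 1) / (real d - 1) \<le> \<eta> + \<beta> \<longleftrightarrow> - 1 \<le> (\<eta> + \<beta>) * (real d - 1)"
        by (rule pos_divide_le_eq[OF pos])
      then show ?thesis unfolding D_def by simp
    qed
    then show ?thesis by (simp add: algebra_simps)
  qed
  let ?G = "\<lambda>x y. 1 - \<eta> - \<beta> + D * \<eta> * x + D * \<beta> * y"
  have "local_positive d (rho d \<eta> \<beta>) \<longleftrightarrow> (0 \<le> ?G 0 0 \<and> 0 \<le> ?G 1 1 \<and> 0 \<le> ?G 1 0 \<and> 0 \<le> ?G 0 1)"
  proof
    assume L: "local_positive d (rho d \<eta> \<beta>)"
    note R = L[unfolded lp_iff, rule_format]
    note U = units[OF assms]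
    note V = vals[OF assms]
    have "0 \<le> ?G 0 0" using R[OF U(1) U(2)] V Fv_iff[OF assms] unfolding D_def by simp
    moreover have "0 \<le> ?G 1 1" using R[OF U(1) U(1)] V Fv_iff[OF assms] unfolding D_def by simp
    moreover have "0 \<le> ?G 1 0" using R[OF U(3) U(3)] V Fv_iff[OF assms] unfolding D_def by simp
    moreover have "0 \<le> ?G 0 1" using R[OF U(3) U(4)] V Fv_iff[OF assms] unfolding D_def by simp
    ultimately show "0 \<le> ?G 0 0 \<and> 0 \<le> ?G 1 1 \<and> 0 \<le> ?G 1 0 \<and> 0 \<le> ?G 0 1" by blast
  next
    assume H: "0 \<le> ?G 0 0 \<and> 0 \<le> ?G 1 1 \<and> 0 \<le> ?G 1 0 \<and> 0 \<le> ?G 0 1"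
    show "local_positive d (rho d \<eta> \<beta>)"
      unfolding lp_iff
    proof (intro allI impI)
      fix \<psi> \<phi> assume u1: "unitv d \<psi>" and u2: "unitv d \<phi>"
      define x where "x = (cmod (\<Sum>a<d. cnj (\<psi> a) * \<phi> a))\<^sup>2"
      define y where "y = (cmod (\<Sum>a<d. \<psi> a * \<phi> a))\<^sup>2"
      have "cmod (\<Sum>a<d. cnj (\<psi> a) * \<phi> a) \<le> 1"
        using u1 u2 unfolding unitv_def by (intro cs[where f=cnj]) auto
      then have x01: "0 \<le> x" "x \<le> 1" unfolding x_def by (auto simp: power_le_one)
      have "cmod (\<Sum>a<d. (\<lambda>z. z) (\<psi> a) * \<phi> a) \<le> 1"
        using u1 u2 unfolding unitv_def by (intro cs[where f="\<lambda>z. z"]) auto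
      then have y01: "0 \<le> y" "y \<le> 1" unfolding y_def by (auto simp: power_le_one)
      have eq: "?G x y = (1-x)*(1-y) * ?G 0 0 + x*(1-y) * ?G 1 0 + (1-x)*y * ?G 0 1 + x*y * ?G 1 1"
        by (simp add: algebra_simps)
      have "0 \<le> (1-x)*(1-y) * ?G 0 0 + x*(1-y) * ?G 1 0 + (1-x)*y * ?G 0 1 + x*y * ?G 1 1"
        using H x01 y01 by (intro bil) auto
      then have "0 \<le> ?G x y" using eq by simp
      then show "0 \<le> Fv d \<eta> \<beta> ((cmod (\<Sum>a<d. cnj (\<psi> a) * \<phi> a))\<^sup>2) ((cmod (\<Sum>a<d. \<psi> a * \<phi> a))\<^sup>2)"
        using Fv_iff[OF assms] unfolding x_def y_def D_def by simp
    qed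
  qed
  also have "\<dots> \<longleftrightarrow> (- 1 / (real d - 1) \<le> \<eta> + \<beta> \<and> \<eta> + \<beta> \<le> 1 \<and>
     - (real d - 1) * \<eta> + \<beta> \<le> 1 \<and> \<eta> - (real d - 1) * \<beta> \<le> 1)"
    using e1 unfolding D_def[symmetric] by (auto simp: algebra_simps)
  finally show ?thesis .
qed

end
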